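(* Let $R$ be a commutative ring with unity in which every zero divisor is harmless, and let $r\in R$ be a non-zero, non-unit element. Then the following are equivalent: (i) $r$ is irreducible; (ii) $r$ is B-irreducible; (iii) $r$ is F-irreducible.
   Context: A zero divisor $r$ of $R$ is called harmless if there exists a unit $u\in R$ with $r=1-u$. An element $r\in R$ is called irreducible if whenever $r=ab$ with $a,b\in R$, then $a$ is a unit or $b$ is a unit. A non-zero, non-unit element $r\in R$ is called B-irreducible if the principal ideal $(r)$ is a maximal element, with respect to inclusion, of the set of all proper principal ideals of $R$. A factorization of $r$ is an expression $r=a_1\cdots a_n$ with $a_i\in R$; a refinement of this factorization is a factorization obtained by replacing one or more of the factors $a_i$ by a factorization of $a_i$. A non-unit element $r\in R$ is called F-irreducible if every factorization of $r$ has a refinement in which $r$ appears as one of the new factors. *)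

theory Defs
  imports "HOL-Computational_Algebra.Factorial_Ring"
begin

definition zero_divisor :: "'a::comm_ring_1 \<Rightarrow> bool" where
  "zero_divisor z \<longleftrightarrow> (\<exists>s. s \<noteq> 0 \<and> z * s = 0)"

definition harmless :: "'a::comm_ring_1 \<Rightarrow> bool" where
  "harmless z \<longleftrightarrow> zero_divisor z \<and> (\<exists>u. u dvd 1 \<and> z = 1 - u)"

definition pideal :: "'a::comm_ring_1 \<Rightarrow> 'a set" where
  "pideal r = {r * x | x. True}"

definition B_irreducible :: "'a::comm_ring_1 \<Rightarrow> bool" where
  "B_irreducible r \<longleftrightarrow> r \<noteq> 0 \<and> \<not> r dvd 1 \<and> pideal r \<noteq> UNIV \<and>
     (\<forall>s. pideal s \<noteq> UNIV \<and> pideal r \<subseteq> pideal s \<longrightarrow> pideal s = pideal r)"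

definition factorization :: "'a::comm_ring_1 \<Rightarrow> 'a list \<Rightarrow> bool" where
  "factorization r as \<longleftrightarrow> as \<noteq> [] \<and> prod_list as = r"

text \<open>A refinement of the factorization as: each factor as!i is replaced by a
  factorization bss!i of it (possibly the trivial one [as!i]); the refined
  factorization is concat bss.\<close>
definition refinement :: "'a::comm_ring_1 list \<Rightarrow> 'a list list \<Rightarrow> bool" where
  "refinement as bss \<longleftrightarrow> length bss = length as \<and>
     (\<forall>i < length as. factorization (as ! i) (bss ! i))"

definition F_irreducible :: "'a::comm_ring_1 \<Rightarrow> bool" where
  "F_irreducible r \<longleftrightarrow> \<not> r dvd 1 \<and>
     (\<forall>as. factorization r as \<longrightarrow>
        (\<exists>bss. refinement as bss \<and> r \<in> set (concat bss)))"

end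

theory Submission
  imports Defs
begin

lemma pideal_UNIV: "pideal (s::'a::comm_ring_1) = UNIV \<longleftrightarrow> s dvd 1"
proof
  assume "pideal s = UNIV"
  then have "1 \<in> pideal s" by simp
  then show "s dvd 1" unfolding pideal_def by (auto intro: dvdI)
next
  assume "s dvd 1"
  then obtain k where k: "1 = s * k" by (auto elim: dvdE)
  have "y \<in> pideal s" for y
    unfolding pideal_def using k by (auto intro!: exI[of _ "k*y"] simp: mult.assoc[symmetric])
  then show "pideal s = UNIV" by auto
qed

lemma pideal_sub: "pideal (r::'a::comm_ring_1) \<subseteq> pideal s \<longleftrightarrow> s dvd r"
proof
  assume "pideal r \<subseteq> pideal s"
  moreover have "r \<in> pideal r" unfolding pideal_def by (auto intro: exI[of _ 1])
  ultimately show "s dvd r" unfolding pideal_def by (auto intro: dvdI)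
next
  assume "s dvd r"
  then obtain k where "r = s * k" by (auto elim: dvdE)
  then show "pideal r \<subseteq> pideal s" unfolding pideal_def by (auto simp: mult.assoc)
qed

lemma cancel_unit:
  fixes r :: "'a::comm_ring_1"
  assumes H: "\<forall>z::'a. zero_divisor z \<longrightarrow> harmless z" and "r \<noteq> 0" and "r = r * x"
  shows "x dvd 1"
proof -
  have "(1 - x) * r = 0" using assms(3) by (simp add: algebra_simps)
  then have "zero_divisor (1 - x)" unfolding zero_divisor_def using assms(2) by blast
  then have "harmless (1 - x)" using H by blast
  then obtain u where "u dvd 1" "1 - x = 1 - u" unfolding harmless_def by blast
  then show ?thesis by simp
qed

lemma mem_dvd_prod_list: "(x::'a::comm_ring_1) \<in> set xs \<Longrightarrow> x dvd prod_list xs"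
  by (induction xs) auto

lemma irr_list:
  fixes r :: "'a::comm_ring_1"
  assumes irr: "irreducible r"
  shows "v dvd 1 \<Longrightarrow> prod_list as = r * v \<Longrightarrow> \<exists>i<length as. \<exists>u. u dvd 1 \<and> as ! i = r * u"
proof (induction as arbitrary: v)
  case (Nil v)
  then have "r dvd 1" using dvd_triv_left[of r v] by simp
  then show ?case using irr by (simp add: irreducible_def)
next
  case (Cons a rest v)
  obtain w' where w': "1 = v * w'" using Cons.prems(1) by (auto elim: dvdE)
  have e: "r = a * (prod_list rest * w')"
    using Cons.prems(2) w' by (simp add: mult.assoc) (metis mult.assoc mult.commute mult_1_right)
  from irr e have "a dvd 1 \<or> prod_list rest * w' dvd 1" by (auto simp: irreducible_def)
  then show ?case
  proof
    assume "a dvd 1"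
    then obtain a' where a': "1 = a * a'" by (auto elim: dvdE)
    have "prod_list rest = r * (v * a')"
      using Cons.prems(2) a' by simp (metis mult.assoc mult.commute mult_1_right)
    note pr = this
    have "a' dvd 1" using dvd_triv_right[of a' a] a' by simp
    then have "v * a' dvd 1" using mult_dvd_mono[OF Cons.prems(1)] by fastforce
    from Cons.IH[OF this pr] obtain i u where "i < length rest" "u dvd 1" "rest ! i = r * u"
      by blast
    then show ?case by (intro exI[of _ "Suc i"]) auto
  next
    assume "prod_list rest * w' dvd 1"
    then obtain k where k: "1 = prod_list rest * w' * k" by (auto elim: dvdE)
    have "a = a * (prod_list rest * w' * k)" using k by simp
    also have "\<dots> = r * k" using e by (simp add: mult.assoc)
    finally have "a = r * k" .
    moreover have "k dvd 1" using dvd_triv_right[of k "prod_list rest * w'"] k by simp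
    ultimately show ?case by (intro exI[of _ 0]) auto
  qed
qed

theorem mainTheorem5:
  fixes r :: "'a::comm_ring_1"
  assumes all_harmless: "\<forall>z::'a. zero_divisor z \<longrightarrow> harmless z"
    and r_nonzero: "r \<noteq> 0"
    and r_nonunit: "\<not> r dvd 1"
  shows "(irreducible r \<longleftrightarrow> B_irreducible r) \<and> (B_irreducible r \<longleftrightarrow> F_irreducible r)"
proof -
  have I2B: "B_irreducible r" if irr: "irreducible r"
  proof -
    have "pideal s = pideal r" if "\<not> s dvd 1" "s dvd r" for s
    proof -
      obtain t where t: "r = s * t" using \<open>s dvd r\<close> by (auto elim: dvdE)
      then have "t dvd 1" using irr that(1) by (auto simp: irreducible_def)
      then obtain t' where t': "1 = t * t'" by (auto elim: dvdE)
      have "s = r * t'" using t t' by (metis mult.assoc mult_1_right)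
      then have "r dvd s" by simp
      then show ?thesis using that(2) pideal_sub by (metis subset_antisym)
    qed
    then have "\<forall>s. pideal s \<noteq> UNIV \<and> pideal r \<subseteq> pideal s \<longrightarrow> pideal s = pideal r"
      unfolding pideal_UNIV pideal_sub by blast
    then show ?thesis unfolding B_irreducible_def using r_nonzero r_nonunit pideal_UNIV by blast
  qed
  have B2I: "irreducible r" if B: "B_irreducible r"
  proof -
    have "a dvd 1 \<or> b dvd 1" if ab: "r = a * b" for a b
    proof (cases "a dvd 1")
      case False
      have "a dvd r" using ab by simp
      then have "pideal a = pideal r" using B False
        unfolding B_irreducible_def pideal_UNIV pideal_sub by blast
      then have "r dvd a" using pideal_sub by (metis order_refl)
      then obtain c where c: "a = r * c" by (auto elim: dvdE)
      have "r = r * (c * b)" using ab c by (simp add: mult.assoc)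
      then have "c * b dvd 1" by (rule cancel_unit[OF all_harmless r_nonzero])
      then show ?thesis by (metis dvd_mult_right)
    qed simp
    then show ?thesis using r_nonzero r_nonunit unfolding irreducible_def by blast
  qed
  have I2F: "F_irreducible r" if irr: "irreducible r"
  proof -
    have "\<exists>bss. refinement as bss \<and> r \<in> set (concat bss)" if fa: "factorization r as" for as
    proof -
      have "prod_list as = r * 1" using fa by (simp add: factorization_def)
      from irr_list[OF irr _ this] obtain i u where i: "i < length as" "u dvd 1" "as ! i = r * u"
        by auto
      define bss where "bss = map (\<lambda>j. if j = i then [r, u] else [as ! j]) [0..<length as]"
      have "refinement as bss" unfolding refinement_def bss_def factorization_def
        using i by auto
      moreover have "r \<in> set (concat bss)" unfolding bss_def using i(1)
        by (auto intro!: bexI[of _ i])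
      ultimately show ?thesis by blast
    qed
    then show ?thesis unfolding F_irreducible_def using r_nonunit by blast
  qed
  have F2I: "irreducible r" if F: "F_irreducible r"
  proof -
    have "a dvd 1 \<or> b dvd 1" if ab: "r = a * b" for a b
    proof -
      have "factorization r [a, b]" using ab by (simp add: factorization_def)
      then obtain bss where bss: "refinement [a, b] bss" "r \<in> set (concat bss)"
        using F unfolding F_irreducible_def by blast
      have l: "length bss = 2" and f0: "factorization a (bss ! 0)" and f1: "factorization b (bss ! 1)"
        using bss(1) unfolding refinement_def by auto
      obtain x y where "bss = [x, y]" using l by (auto simp: numeral_2_eq_2 length_Suc_conv)
      then have "r \<in> set (bss ! 0) \<or> r \<in> set (bss ! 1)" using bss(2) by auto
      then show ?thesis
      proof
        assume "r \<in> set (bss ! 0)"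
        then have "r dvd a" using f0 mem_dvd_prod_list[of r "bss!0"] by (simp add: factorization_def)
        then obtain c where c: "a = r * c" by (auto elim: dvdE)
        have "r = r * (c * b)" using ab c by (simp add: mult.assoc)
        then have "c * b dvd 1" by (rule cancel_unit[OF all_harmless r_nonzero])
        then show ?thesis by (metis dvd_mult_right)
      next
        assume "r \<in> set (bss ! 1)"
        then have "r dvd b" using f1 mem_dvd_prod_list[of r "bss!1"] by (simp add: factorization_def)
        then obtain c where c: "b = r * c" by (auto elim: dvdE)
        have "r = r * (c * a)" using ab c by (simp add: ac_simps)
        then have "c * a dvd 1" by (rule cancel_unit[OF all_harmless r_nonzero])
        then show ?thesis by (metis dvd_mult_right)
      qed
    qed
    then show ?thesis using r_nonzero r_nonunit unfolding irreducible_def by blast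
  qed
  show ?thesis using I2B B2I I2F F2I by blast
qed

end
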